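(* Let $s\ge 4$ be an integer and $G\in\mathcal G^s_2$. Then $\lambda(G)\ge v(G)/(s+1)$.
   Context: All graphs are finite and simple. For integers $1\le r\le s$, $\mathcal G^s_r$ denotes the set of graphs in which every vertex has degree at least $r$ and at most $s$. $v(G)$ is the number of vertices of $G$. $\lambda(G)$ denotes the maximum number of pairwise vertex-disjoint subgraphs of $G$ each of which is a path with exactly two edges. *)

theory Defs
  imports Complex_Main
begin

definition simple_graph :: "'a set \<Rightarrow> ('a \<Rightarrow> 'a \<Rightarrow> bool) \<Rightarrow> bool" where
  "simple_graph V E \<longleftrightarrow> finite V \<and> (\<forall>u v. E u v \<longrightarrow> u \<in> V \<and> v \<in> V)
     \<and> (\<forall>u v. E u v \<longrightarrow> E v u) \<and> (\<forall>v. \<not> E v v)"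

definition degree :: "'a set \<Rightarrow> ('a \<Rightarrow> 'a \<Rightarrow> bool) \<Rightarrow> 'a \<Rightarrow> nat" where
  "degree V E v = card {u \<in> V. E v u}"

definition in_class :: "nat \<Rightarrow> nat \<Rightarrow> 'a set \<Rightarrow> ('a \<Rightarrow> 'a \<Rightarrow> bool) \<Rightarrow> bool" where
  "in_class r s V E \<longleftrightarrow> simple_graph V E \<and> (\<forall>v\<in>V. r \<le> degree V E v \<and> degree V E v \<le> s)"

definition is_P3 :: "('a \<Rightarrow> 'a \<Rightarrow> bool) \<Rightarrow> 'a \<times> 'a \<times> 'a \<Rightarrow> bool" where
  "is_P3 E p = (case p of (a, b, c) \<Rightarrow> a \<noteq> c \<and> E a b \<and> E b c)"

definition P3_verts :: "'a \<times> 'a \<times> 'a \<Rightarrow> 'a set" where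
  "P3_verts p = (case p of (a, b, c) \<Rightarrow> {a, b, c})"

definition P3_packing :: "('a \<Rightarrow> 'a \<Rightarrow> bool) \<Rightarrow> ('a \<times> 'a \<times> 'a) set \<Rightarrow> bool" where
  "P3_packing E P \<longleftrightarrow> (\<forall>p\<in>P. is_P3 E p)
     \<and> (\<forall>p\<in>P. \<forall>q\<in>P. p \<noteq> q \<longrightarrow> P3_verts p \<inter> P3_verts q = {})"

definition lambda :: "'a set \<Rightarrow> ('a \<Rightarrow> 'a \<Rightarrow> bool) \<Rightarrow> nat" where
  "lambda V E = Max {card P | P. P3_packing E P \<and> finite P}"

end

theory Submission
  imports Defs
begin


definition ctr :: "('a \<Rightarrow> 'a) \<Rightarrow> ('a \<Rightarrow> nat) \<Rightarrow> 'a \<Rightarrow> 'a" where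
  "ctr par lev v = (if lev v = 0 then v else if lev v = 1 then par v else par (par v))"

definition prt :: "'a set \<Rightarrow> ('a \<Rightarrow> 'a) \<Rightarrow> ('a \<Rightarrow> nat) \<Rightarrow> 'a \<Rightarrow> 'a set" where
  "prt V par lev d = {v \<in> V. ctr par lev v = d}"

definition loc_ok :: "'a set \<Rightarrow> ('a \<Rightarrow> 'a \<Rightarrow> bool) \<Rightarrow> ('a \<Rightarrow> 'a) \<Rightarrow> ('a \<Rightarrow> nat) \<Rightarrow> 'a \<Rightarrow> bool" where
  "loc_ok V E par lev v \<longleftrightarrow> lev v \<le> 2 \<and> (lev v \<noteq> 0 \<longrightarrow> par v \<in> V \<and> E v (par v) \<and> Suc (lev (par v)) = lev v)"

definition valid :: "'a set \<Rightarrow> ('a \<Rightarrow> 'a \<Rightarrow> bool) \<Rightarrow> ('a \<Rightarrow> 'a) \<Rightarrow> ('a \<Rightarrow> nat) \<Rightarrow> bool" where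
  "valid V E par lev \<longleftrightarrow> (\<forall>v\<in>V. loc_ok V E par lev v) \<and> (\<forall>d\<in>V. lev d = 0 \<longrightarrow> 3 \<le> card (prt V par lev d))"

definition exc :: "'a set \<Rightarrow> nat \<Rightarrow> ('a \<Rightarrow> 'a) \<Rightarrow> ('a \<Rightarrow> nat) \<Rightarrow> nat" where
  "exc V s par lev = (\<Sum>d\<in>V. card (prt V par lev d) - Suc s)"

definition dep :: "'a set \<Rightarrow> ('a \<Rightarrow> nat) \<Rightarrow> nat" where
  "dep V lev = (\<Sum>v\<in>V. lev v)"

definition mu :: "'a set \<Rightarrow> nat \<Rightarrow> ('a \<Rightarrow> 'a) \<Rightarrow> ('a \<Rightarrow> nat) \<Rightarrow> nat" where
  "mu V s par lev = (2 * card V + 1) * exc V s par lev + dep V lev"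

locale pg =
  fixes V :: "'a set" and E :: "'a \<Rightarrow> 'a \<Rightarrow> bool" and s :: nat
  assumes fin: "finite V"
    and inV: "\<And>u v. E u v \<Longrightarrow> u \<in> V \<and> v \<in> V"
    and sym: "\<And>u v. E u v \<Longrightarrow> E v u"
    and irr: "\<And>v. \<not> E v v"
    and dlo: "\<And>v. v \<in> V \<Longrightarrow> 2 \<le> degree V E v"
    and dhi: "\<And>v. v \<in> V \<Longrightarrow> degree V E v \<le> s"
    and s4: "4 \<le> s"
begin

definition better :: "('a \<Rightarrow> 'a) \<Rightarrow> ('a \<Rightarrow> nat) \<Rightarrow> bool" where
  "better par lev \<longleftrightarrow> (\<exists>par' lev'. valid V E par' lev' \<and> mu V s par' lev' < mu V s par lev)"

lemma valid_loc: "valid V E par lev \<Longrightarrow> v \<in> V \<Longrightarrow> loc_ok V E par lev v"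
  by (simp add: valid_def)

lemma valid_card: "valid V E par lev \<Longrightarrow> d \<in> V \<Longrightarrow> lev d = 0 \<Longrightarrow> 3 \<le> card (prt V par lev d)"
  by (simp add: valid_def)

lemma lev_le2: "valid V E par lev \<Longrightarrow> v \<in> V \<Longrightarrow> lev v \<le> 2"
  by (simp add: valid_def loc_ok_def)

lemma par_ok: "valid V E par lev \<Longrightarrow> v \<in> V \<Longrightarrow> lev v \<noteq> 0 \<Longrightarrow>
   par v \<in> V \<and> E v (par v) \<and> Suc (lev (par v)) = lev v"
  by (simp add: valid_def loc_ok_def)

lemma ctr_props:
  assumes "valid V E par lev" "v \<in> V"
  shows "ctr par lev v \<in> V \<and> lev (ctr par lev v) = 0"
proof -
  have "lev v \<le> 2" using lev_le2 assms by blast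
  then consider "lev v = 0" | "lev v = 1" | "lev v = 2" by linarith
  then show ?thesis
  proof cases
    case 1 then show ?thesis using assms by (simp add: ctr_def)
  next
    case 2 then show ?thesis using par_ok[OF assms] by (simp add: ctr_def)
  next
    case 3
    have a: "par v \<in> V" "Suc (lev (par v)) = 2" using par_ok[OF assms] 3 by auto
    have "par (par v) \<in> V \<and> Suc (lev (par (par v))) = lev (par v)"
      using par_ok[OF assms(1) a(1)] a by auto
    then show ?thesis using 3 a by (simp add: ctr_def)
  qed
qed

lemma ctr_par:
  assumes "valid V E par lev" "v \<in> V" "lev v \<noteq> 0"
  shows "ctr par lev v = ctr par lev (par v)"
proof -
  have "lev v \<le> 2" using lev_le2 assms by blast
  then consider "lev v = 1" | "lev v = 2" using assms by linarith
  then show ?thesis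
  proof cases
    case 1 then show ?thesis using par_ok[OF assms] by (simp add: ctr_def)
  next
    case 2 then show ?thesis using par_ok[OF assms] by (simp add: ctr_def)
  qed
qed

lemma no_child2:
  assumes "valid V E par lev" "v \<in> V" "lev v \<noteq> 0" "lev (par v) = 2"
  shows False
  using par_ok[OF assms(1-3)] lev_le2[OF assms(1,2)] assms(4) by simp

lemma prt_sub: "prt V par lev d \<subseteq> V"
  by (auto simp: prt_def)

lemma prt_fin: "finite (prt V par lev d)"
  by (rule finite_subset[OF prt_sub fin])

lemma prt_empty:
  assumes "valid V E par lev" "d \<notin> V \<or> lev d \<noteq> 0"
  shows "prt V par lev d = {}"
proof -
  have "\<And>v. v \<in> V \<Longrightarrow> ctr par lev v \<noteq> d"
    using ctr_props[OF assms(1)] assms(2) by metis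
  then show ?thesis unfolding prt_def by blast
qed

lemma prt_closed:
  assumes "valid V E par lev" "v \<in> V" "lev v \<noteq> 0" "par v \<in> prt V par lev d"
  shows "v \<in> prt V par lev d"
  using ctr_par[OF assms(1-3)] assms(2,4) unfolding prt_def by simp

lemma move:
  assumes val: "valid V E par lev" and NV: "N \<subseteq> V"
    and out: "\<And>v. v \<notin> N \<Longrightarrow> par' v = par v \<and> lev' v = lev v"
    and closed: "\<And>v. v \<in> V \<Longrightarrow> lev v \<noteq> 0 \<Longrightarrow> par v \<in> N \<Longrightarrow> v \<in> N"
    and inN: "\<And>v. v \<in> N \<Longrightarrow> loc_ok V E par' lev' v \<and> ctr par' lev' v = t"
  shows "\<forall>v\<in>V. loc_ok V E par' lev' v"
    and "\<And>d. prt V par' lev' d = (prt V par lev d - N) \<union> (if d = t then N else {})"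
proof -
  have c: "ctr par' lev' v = ctr par lev v" if "v \<in> V" "v \<notin> N" for v
  proof -
    have "lev v \<le> 2" using lev_le2 val that by blast
    then consider "lev v = 0" | "lev v = 1" | "lev v = 2" by linarith
    then show ?thesis
    proof cases
      case 1 then show ?thesis using out[OF that(2)] by (simp add: ctr_def)
    next
      case 2 then show ?thesis using out[OF that(2)] by (simp add: ctr_def)
    next
      case 3
      have "par v \<notin> N" using closed[OF that(1)] 3 that(2) by auto
      then show ?thesis using 3 out[OF that(2)] out[of "par v"] by (simp add: ctr_def)
    qed
  qed
  show "\<forall>v\<in>V. loc_ok V E par' lev' v"
  proof
    fix v assume v: "v \<in> V"
    show "loc_ok V E par' lev' v"
    proof (cases "v \<in> N")
      case True then show ?thesis using inN by blast
    next
      case False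
      have lo: "loc_ok V E par lev v" using val v by (simp add: valid_def)
      show ?thesis
      proof (cases "lev v = 0")
        case True then show ?thesis using lo out[OF False] by (simp add: loc_ok_def)
      next
        case nz: False
        have "par v \<notin> N" using closed[OF v nz] False by auto
        then show ?thesis using lo out[OF False] out[of "par v"] by (simp add: loc_ok_def)
      qed
    qed
  qed
  have cc: "\<forall>v\<in>V. ctr par' lev' v = (if v \<in> N then t else ctr par lev v)"
    using c inN by auto
  fix d
  have e1: "prt V par' lev' d = {v\<in>V. (if v \<in> N then t else ctr par lev v) = d}"
    unfolding prt_def
  proof (rule Collect_cong)
    fix v show "(v \<in> V \<and> ctr par' lev' v = d) = (v \<in> V \<and> (if v \<in> N then t else ctr par lev v) = d)"
      using cc by (cases "v \<in> V") simp_all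
  qed
  show "prt V par' lev' d = (prt V par lev d - N) \<union> (if d = t then N else {})"
  proof (rule set_eqI)
    fix v
    show "v \<in> prt V par' lev' d \<longleftrightarrow> v \<in> (prt V par lev d - N) \<union> (if d = t then N else {})"
      unfolding e1
    proof (cases "v \<in> N")
      case True
      then show "v \<in> {v \<in> V. (if v \<in> N then t else ctr par lev v) = d} \<longleftrightarrow>
        v \<in> (prt V par lev d - N) \<union> (if d = t then N else {})" using NV by auto
    next
      case False
      then show "v \<in> {v \<in> V. (if v \<in> N then t else ctr par lev v) = d} \<longleftrightarrow>
        v \<in> (prt V par lev d - N) \<union> (if d = t then N else {})" by (simp add: prt_def)
    qed
  qed
qed

lemma mu_lt1:
  assumes "exc V s par' lev' \<le> exc V s par lev" "dep V lev' < dep V lev"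
  shows "mu V s par' lev' < mu V s par lev"
  unfolding mu_def by (intro add_le_less_mono mult_le_mono2 assms)

lemma dep_bound: "valid V E par lev \<Longrightarrow> dep V lev \<le> 2 * card V"
proof -
  assume "valid V E par lev"
  then have "\<forall>v\<in>V. lev v \<le> 2" using lev_le2 by blast
  then have "(\<Sum>v\<in>V. lev v) \<le> (\<Sum>v\<in>V. 2)" by (intro sum_mono) auto
  then show ?thesis by (simp add: dep_def mult.commute)
qed

lemma mu_lt2:
  assumes "valid V E par' lev'" "exc V s par' lev' < exc V s par lev"
  shows "mu V s par' lev' < mu V s par lev"
proof -
  let ?n = "2 * card V + 1"
  have "dep V lev' \<le> 2 * card V" using dep_bound assms(1) by blast
  have "exc V s par' lev' + 1 \<le> exc V s par lev" using assms(2) by simp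
  then have "?n * (exc V s par' lev' + 1) \<le> ?n * exc V s par lev" by (rule mult_le_mono2)
  then have "?n * exc V s par' lev' + ?n \<le> ?n * exc V s par lev" by (simp add: algebra_simps)
  then show ?thesis using \<open>dep V lev' \<le> 2 * card V\<close> by (simp add: mu_def)
qed


lemma move_valid:
  assumes val: "valid V E par lev" and NV: "N \<subseteq> V"
    and out: "\<And>v. v \<notin> N \<Longrightarrow> par' v = par v \<and> lev' v = lev v"
    and closed: "\<And>v. v \<in> V \<Longrightarrow> lev v \<noteq> 0 \<Longrightarrow> par v \<in> N \<Longrightarrow> v \<in> N"
    and inN: "\<And>v. v \<in> N \<Longrightarrow> loc_ok V E par' lev' v \<and> ctr par' lev' v = t"
    and cards: "\<And>d. d \<in> V \<Longrightarrow> lev' d = 0 \<Longrightarrow> 3 \<le> card ((prt V par lev d - N) \<union> (if d = t then N else {}))"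
  shows "valid V E par' lev'"
  using move[OF val NV out closed inN] cards by (simp add: valid_def)

lemma sum_pair_le:
  fixes f f' :: "'b \<Rightarrow> nat"
  assumes "finite A" "c \<in> A" "t \<in> A" "c \<noteq> t"
    and "\<And>d. d \<in> A \<Longrightarrow> d \<noteq> c \<Longrightarrow> d \<noteq> t \<Longrightarrow> f' d \<le> f d"
    and "f' c + f' t \<le> f c + f t"
  shows "sum f' A \<le> sum f A"
proof -
  have A: "A = insert c (insert t (A - {c, t}))" using assms(2,3) by auto
  have fin2: "finite (A - {c, t})" using assms(1) by simp
  have n1: "c \<notin> insert t (A - {c, t})" using assms(4) by simp
  have n2: "t \<notin> A - {c, t}" by simp
  have s1: "sum f A = f c + (f t + sum f (A - {c, t}))"
    by (subst A, simp only: sum.insert[OF finite.insertI[OF fin2] n1] sum.insert[OF fin2 n2])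
  have s2: "sum f' A = f' c + (f' t + sum f' (A - {c, t}))"
    by (subst A, simp only: sum.insert[OF finite.insertI[OF fin2] n1] sum.insert[OF fin2 n2])
  have "sum f' (A - {c, t}) \<le> sum f (A - {c, t})"
    using assms(5) by (intro sum_mono) auto
  then show ?thesis using s1 s2 assms(6) by linarith
qed

lemma exc_strict:
  assumes sub: "\<And>d. d \<in> V \<Longrightarrow> d \<noteq> t \<Longrightarrow> prt V par' lev' d \<subseteq> prt V par lev d"
    and ct: "card (prt V par' lev' t) \<le> Suc s"
    and cV: "c \<in> V" and ctn: "c \<noteq> t"
    and ps: "prt V par' lev' c \<subset> prt V par lev c" and big: "Suc s < card (prt V par lev c)"
  shows "exc V s par' lev' < exc V s par lev"
  unfolding exc_def
proof (rule sum_strict_mono_ex1[OF fin])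
  show "\<forall>d\<in>V. card (prt V par' lev' d) - Suc s \<le> card (prt V par lev d) - Suc s"
  proof
    fix d assume d: "d \<in> V"
    show "card (prt V par' lev' d) - Suc s \<le> card (prt V par lev d) - Suc s"
    proof (cases "d = t")
      case True then show ?thesis using ct by simp
    next
      case False
      have "card (prt V par' lev' d) \<le> card (prt V par lev d)"
        by (rule card_mono[OF prt_fin sub[OF d False]])
      then show ?thesis by simp
    qed
  qed
  have "card (prt V par' lev' c) < card (prt V par lev c)"
    by (rule psubset_card_mono[OF prt_fin ps])
  then show "\<exists>d\<in>V. card (prt V par' lev' d) - Suc s < card (prt V par lev d) - Suc s"
    using cV big by (intro bexI[of _ c]) auto
qed

lemma better_I1:
  assumes "valid V E par' lev'" "exc V s par' lev' \<le> exc V s par lev" "dep V lev' < dep V lev"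
  shows "better par lev"
  using assms mu_lt1 unfolding better_def by blast

lemma better_I2:
  assumes "valid V E par' lev'" "exc V s par' lev' < exc V s par lev"
  shows "better par lev"
  using assms mu_lt2 unfolding better_def by blast

lemma dep_strict:
  assumes "\<And>v. v \<in> V \<Longrightarrow> lev' v \<le> lev v" "y \<in> V" "lev' y < lev y"
  shows "dep V lev' < dep V lev"
  unfolding dep_def by (rule sum_strict_mono_ex1[OF fin]) (use assms in auto)

lemma M1:
  assumes val: "valid V E par lev" and yV: "y \<in> V" and ly: "lev y = 2"
    and Eyc: "E y (ctr par lev y)"
  shows "better par lev"
proof -
  define c where "c = ctr par lev y"
  have cV: "c \<in> V" "lev c = 0" using ctr_props[OF val yV] c_def by auto
  have cy: "c \<noteq> y" using cV ly by auto
  define par' where "par' = par(y := c)"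
  define lev' where "lev' = lev(y := 1)"
  have out: "\<And>v. v \<notin> {y} \<Longrightarrow> par' v = par v \<and> lev' v = lev v"
    by (simp add: par'_def lev'_def)
  have closed: "\<And>v. v \<in> V \<Longrightarrow> lev v \<noteq> 0 \<Longrightarrow> par v \<in> {y} \<Longrightarrow> v \<in> {y}"
    using no_child2[OF val] ly by fastforce
  have inN: "\<And>v. v \<in> {y} \<Longrightarrow> loc_ok V E par' lev' v \<and> ctr par' lev' v = c"
    using cV cy Eyc c_def by (auto simp: loc_ok_def ctr_def par'_def lev'_def)
  have yc: "y \<in> prt V par lev c" using yV c_def by (simp add: prt_def)
  have pe: "(prt V par lev d - {y}) \<union> (if d = c then {y} else {}) = prt V par lev d" for d
  proof (cases "d = c")
    case True then show ?thesis using yc by auto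
  next
    case False
    have "y \<notin> prt V par lev d" using False c_def by (simp add: prt_def)
    then show ?thesis using False by simp
  qed
  have yV': "{y} \<subseteq> V" using yV by simp
  have P: "prt V par' lev' d = prt V par lev d" for d
    using move(2)[OF val yV' out closed inN] pe by simp
  have val': "valid V E par' lev'"
  proof (rule move_valid[OF val yV' out closed inN])
    fix d assume d: "d \<in> V" "lev' d = 0"
    have "d \<noteq> y" using d(2) by (auto simp: lev'_def)
    then have "lev d = 0" using d(2) by (simp add: lev'_def)
    then show "3 \<le> card ((prt V par lev d - {y}) \<union> (if d = c then {y} else {}))"
      using pe valid_card[OF val d(1)] by simp
  qed
  have "exc V s par' lev' = exc V s par lev" by (simp add: exc_def P)
  moreover have "dep V lev' < dep V lev"
    by (rule dep_strict[OF _ yV]) (auto simp: lev'_def ly)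
  ultimately show ?thesis using better_I1[OF val'] by simp
qed

definition chl :: "('a \<Rightarrow> 'a) \<Rightarrow> ('a \<Rightarrow> nat) \<Rightarrow> 'a \<Rightarrow> 'a set" where
  "chl par lev x = {v \<in> V. lev v \<noteq> 0 \<and> par v = x}"

lemma chl_fin: "finite (chl par lev x)"
  by (rule finite_subset[OF _ fin]) (auto simp: chl_def)

lemma chl_props:
  assumes val: "valid V E par lev" and xV: "x \<in> V" and lx: "lev x = 1" and v: "v \<in> chl par lev x"
  shows "v \<in> V \<and> lev v = 2 \<and> par v = x \<and> E v x"
proof -
  have "v \<in> V" "lev v \<noteq> 0" "par v = x" using v by (auto simp: chl_def)
  then show ?thesis using par_ok[OF val, of v] lx by auto
qed

lemma prt_disj:
  "d \<noteq> d' \<Longrightarrow> prt V par lev d \<inter> prt V par lev d' = {}"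
  by (auto simp: prt_def)

lemma ctr1: "lev x = 1 \<Longrightarrow> ctr par lev x = par x"
  by (simp add: ctr_def)

lemma ctr0: "lev x = 0 \<Longrightarrow> ctr par lev x = x"
  by (simp add: ctr_def)

lemma in_prt_ctr: "v \<in> V \<Longrightarrow> v \<in> prt V par lev (ctr par lev v)"
  by (simp add: prt_def)

lemma sum_ind:
  assumes "A \<subseteq> V"
  shows "(\<Sum>v\<in>V. if v \<in> A then 1 else (0::nat)) = card A"
proof -
  have "(\<Sum>v\<in>V. if v \<in> A then 1 else (0::nat)) = (\<Sum>v\<in>{v\<in>V. v \<in> A}. 1)"
    using sum.inter_filter[OF fin, of "\<lambda>_. (1::nat)" "\<lambda>v. v \<in> A"] by simp
  also have "{v\<in>V. v \<in> A} = A" using assms by auto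
  finally show ?thesis by simp
qed

lemma card3:
  assumes "finite A" "a \<in> A" "b \<in> A" "c \<in> A" "a \<noteq> b" "a \<noteq> c" "b \<noteq> c"
  shows "3 \<le> card A"
proof -
  have "card {a, b, c} = 3" using assms(5-7) by simp
  moreover have "card {a, b, c} \<le> card A" using assms(1-4) by (intro card_mono) auto
  ultimately show ?thesis by simp
qed

lemma M2:
  assumes val: "valid V E par lev" and xV: "x \<in> V" and lx: "lev x = 1"
    and K2: "2 \<le> card (chl par lev x)"
    and R3: "3 \<le> card (prt V par lev (par x) - insert x (chl par lev x))"
  shows "better par lev"
proof -
  define K where "K = chl par lev x"
  define c where "c = par x"
  define N where "N = insert x K"
  have cV: "c \<in> V" "lev c = 0" "E x c" using par_ok[OF val xV] lx c_def by auto
  have Kp: "\<And>v. v \<in> K \<Longrightarrow> v \<in> V \<and> lev v = 2 \<and> par v = x \<and> E v x"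
    using chl_props[OF val xV lx] K_def by blast
  have xK: "x \<notin> K" using Kp lx by fastforce
  have NV: "N \<subseteq> V" using Kp xV N_def by auto
  define lev' where "lev' = (\<lambda>v. if v \<in> N then lev v - 1 else lev v)"
  have out: "\<And>v. v \<notin> N \<Longrightarrow> par v = par v \<and> lev' v = lev v" by (simp add: lev'_def)
  have closed: "\<And>v. v \<in> V \<Longrightarrow> lev v \<noteq> 0 \<Longrightarrow> par v \<in> N \<Longrightarrow> v \<in> N"
  proof -
    fix v assume v: "v \<in> V" "lev v \<noteq> 0" "par v \<in> N"
    show "v \<in> N"
    proof (cases "par v = x")
      case True then show ?thesis using v by (simp add: N_def K_def chl_def)
    next
      case False
      then have "par v \<in> K" using v N_def by auto
      then have "lev (par v) = 2" using Kp by blast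
      then show ?thesis using no_child2[OF val v(1,2)] by blast
    qed
  qed
  have inN: "\<And>v. v \<in> N \<Longrightarrow> loc_ok V E par lev' v \<and> ctr par lev' v = x"
  proof -
    fix v assume v: "v \<in> N"
    show "loc_ok V E par lev' v \<and> ctr par lev' v = x"
    proof (cases "v = x")
      case True then show ?thesis using lx N_def by (simp add: loc_ok_def ctr_def lev'_def)
    next
      case False
      then have vK: "v \<in> K" using v N_def by auto
      then have "lev' v = 1" "lev' x = 0" using Kp lx N_def by (auto simp: lev'_def)
      then show ?thesis using Kp[OF vK] xV by (simp add: loc_ok_def ctr_def)
    qed
  qed
  have xP: "x \<in> prt V par lev c" using xV lx c_def by (simp add: prt_def ctr_def)
  have NP: "N \<subseteq> prt V par lev c"
  proof
    fix v assume "v \<in> N"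
    then consider "v = x" | "v \<in> K" using N_def by auto
    then show "v \<in> prt V par lev c"
    proof cases
      case 1 then show ?thesis using xP by simp
    next
      case 2 then show ?thesis using Kp[OF 2] prt_closed[OF val, of v c] xP by auto
    qed
  qed
  have Px: "prt V par lev x = {}" using prt_empty[OF val] lx by simp
  have cx: "c \<noteq> x" using cV lx by auto
  have mv: "prt V par lev' d = (prt V par lev d - N) \<union> (if d = x then N else {})" for d
    using move(2)[OF val NV out closed inN] by blast
  have oth: "prt V par lev d - N = prt V par lev d" if "d \<noteq> c" for d
    using prt_disj[OF that, of par lev] NP by blast
  have finK: "finite K" using chl_fin K_def by simp
  have cardN: "card N = Suc (card K)" using N_def xK finK by simp
  have val': "valid V E par lev'"
  proof (rule move_valid[OF val NV out closed inN])
    fix d assume d: "d \<in> V" "lev' d = 0"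
    show "3 \<le> card ((prt V par lev d - N) \<union> (if d = x then N else {}))"
    proof (cases "d \<in> N")
      case True
      have "d = x"
      proof (rule ccontr)
        assume "d \<noteq> x" then have "d \<in> K" using True N_def by auto
        then show False using d(2) Kp True by (auto simp: lev'_def)
      qed
      then show ?thesis using Px cardN K2 K_def by simp
    next
      case False
      then have ld: "lev d = 0" "d \<noteq> x" using d(2) N_def by (auto simp: lev'_def)
      show ?thesis
      proof (cases "d = c")
        case True then show ?thesis using R3 ld(2) N_def K_def c_def by simp
      next
        case False then show ?thesis using oth[OF False] ld valid_card[OF val d(1)] by simp
      qed
    qed
  qed
  have exc_le: "exc V s par lev' \<le> exc V s par lev"
    unfolding exc_def
  proof (rule sum_pair_le[OF fin cV(1) xV cx])
    fix d assume d: "d \<in> V" "d \<noteq> c" "d \<noteq> x"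
    have "card (prt V par lev' d) \<le> card (prt V par lev d)"
      using mv[of d] d(3) by (simp add: card_mono[OF prt_fin])
    then show "card (prt V par lev' d) - Suc s \<le> card (prt V par lev d) - Suc s" by simp
  next
    have a: "card (prt V par lev c) = card (prt V par lev c - N) + card N"
      using card_Diff_subset[OF finite_subset[OF NP prt_fin] NP] card_mono[OF prt_fin NP] by simp
    have b: "prt V par lev' c = prt V par lev c - N" using mv[of c] cx by simp
    have e: "prt V par lev' x = N" using mv[of x] Px by simp
    show "card (prt V par lev' c) - Suc s + (card (prt V par lev' x) - Suc s)
      \<le> card (prt V par lev c) - Suc s + (card (prt V par lev x) - Suc s)"
      unfolding a b e Px by simp
  qed
  have "dep V lev' < dep V lev"
    by (rule dep_strict[OF _ xV]) (auto simp: lev'_def lx N_def)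
  then show ?thesis using better_I1[OF val' exc_le] by simp
qed

lemma M3:
  assumes val: "valid V E par lev" and xV: "x \<in> V" and lx: "lev x = 1"
    and W0p: "\<And>w. w \<in> prt V par lev (par x) - {par x, x} - chl par lev x \<Longrightarrow>
                  lev w = 1 \<and> (\<forall>v\<in>V. lev v \<noteq> 0 \<longrightarrow> par v \<noteq> w)"
    and lt: "card (prt V par lev (par x) - {par x, x} - chl par lev x) < card (chl par lev x)"
  shows "better par lev"
proof -
  define K where "K = chl par lev x"
  define c where "c = par x"
  define P where "P = prt V par lev c"
  define W0 where "W0 = P - {c, x} - K"
  have cV: "c \<in> V" "lev c = 0" "E x c" using par_ok[OF val xV] lx c_def by auto
  have Kp: "\<And>v. v \<in> K \<Longrightarrow> v \<in> V \<and> lev v = 2 \<and> par v = x \<and> E v x"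
    using chl_props[OF val xV lx] K_def by blast
  have xK: "x \<notin> K" using Kp lx by fastforce
  have cK: "c \<notin> K" using Kp cV by fastforce
  have cx: "c \<noteq> x" using cV lx by auto
  have cP: "c \<in> P" using cV P_def by (simp add: prt_def ctr_def)
  have xP: "x \<in> P" using xV lx c_def P_def by (simp add: prt_def ctr_def)
  have KP: "K \<subseteq> P" using Kp prt_closed[OF val, of _ c] xP P_def by auto
  have PV: "P \<subseteq> V" using prt_sub P_def by simp
  have W0p': "\<And>w. w \<in> W0 \<Longrightarrow> lev w = 1 \<and> (\<forall>v\<in>V. lev v \<noteq> 0 \<longrightarrow> par v \<noteq> w)"
    using W0p W0_def P_def K_def c_def by blast
  have W0c: "\<And>w. w \<in> W0 \<Longrightarrow> par w = c \<and> E w c \<and> w \<in> V"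
  proof -
    fix w assume w: "w \<in> W0"
    have "w \<in> V" "ctr par lev w = c" using w W0_def P_def by (auto simp: prt_def)
    moreover have "lev w = 1" using W0p'[OF w] by simp
    ultimately show "par w = c \<and> E w c \<and> w \<in> V" using par_ok[OF val, of w] by (simp add: ctr_def)
  qed
  define par' where "par' = (\<lambda>v. if v = c then x else if v \<in> W0 then c else par v)"
  define lev' where "lev' = (\<lambda>v. if v = x then 0 else if v = c then 1 else if v \<in> K then 1
                               else if v \<in> W0 then 2 else lev v)"
  have out: "\<And>v. v \<notin> P \<Longrightarrow> par' v = par v \<and> lev' v = lev v"
    using cP xP KP W0_def by (auto simp: par'_def lev'_def)
  have closed: "\<And>v. v \<in> V \<Longrightarrow> lev v \<noteq> 0 \<Longrightarrow> par v \<in> P \<Longrightarrow> v \<in> P"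
    using prt_closed[OF val] P_def by blast
  have inN: "\<And>v. v \<in> P \<Longrightarrow> loc_ok V E par' lev' v \<and> ctr par' lev' v = x"
  proof -
    fix v assume vP: "v \<in> P"
    consider "v = x" | "v = c" | "v \<in> K" | "v \<in> W0" using vP W0_def by blast
    then show "loc_ok V E par' lev' v \<and> ctr par' lev' v = x"
    proof cases
      case 1 then show ?thesis by (simp add: loc_ok_def ctr_def lev'_def)
    next
      case 2
      have "E c x" using cV(3) sym by blast
      then show ?thesis using 2 cx xV W0_def by (simp add: loc_ok_def ctr_def lev'_def par'_def)
    next
      case 3
      have "v \<noteq> c" "v \<notin> W0" "v \<noteq> x" using 3 cK W0_def xK by auto
      then show ?thesis using 3 Kp[OF 3] xV by (simp add: loc_ok_def ctr_def lev'_def par'_def)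
    next
      case 4
      have "v \<noteq> c" "v \<notin> K" "v \<noteq> x" using 4 W0_def by auto
      then show ?thesis using 4 W0c[OF 4] cV cx cK
        by (simp add: loc_ok_def ctr_def lev'_def par'_def)
    qed
  qed
  have Px: "prt V par lev x = {}" using prt_empty[OF val] lx by simp
  have mv: "prt V par' lev' d = (prt V par lev d - P) \<union> (if d = x then P else {})" for d
    using move(2)[OF val PV out closed inN] by blast
  have oth: "prt V par lev d - P = prt V par lev d" if "d \<noteq> c" for d
    using prt_disj[OF that, of par lev] P_def by blast
  have val': "valid V E par' lev'"
  proof (rule move_valid[OF val PV out closed inN])
    fix d assume d: "d \<in> V" "lev' d = 0"
    show "3 \<le> card ((prt V par lev d - P) \<union> (if d = x then P else {}))"
    proof (cases "d \<in> P")
      case True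
      have "d = x"
      proof (rule ccontr)
        assume dx: "d \<noteq> x"
        then consider "d = c" | "d \<in> K" | "d \<in> W0" using True W0_def by blast
        then show False using d(2) dx by cases (auto simp: lev'_def split: if_splits)
      qed
      then show ?thesis using Px valid_card[OF val cV(1,2)] P_def by simp
    next
      case False
      then have ld: "lev d = 0" "d \<noteq> x" "d \<noteq> c" using d(2) out[of d] xP cP by auto
      then show ?thesis using oth[OF ld(3)] valid_card[OF val d(1)] by simp
    qed
  qed
  have exc_le: "exc V s par' lev' \<le> exc V s par lev"
    unfolding exc_def
  proof (rule sum_pair_le[OF fin cV(1) xV cx])
    fix d assume d: "d \<in> V" "d \<noteq> c" "d \<noteq> x"
    have "card (prt V par' lev' d) \<le> card (prt V par lev d)"
      using mv[of d] d(3) by (simp add: card_mono[OF prt_fin])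
    then show "card (prt V par' lev' d) - Suc s \<le> card (prt V par lev d) - Suc s" by simp
  next
    have b: "prt V par' lev' c = {}" using mv[of c] cx P_def by simp
    have e: "prt V par' lev' x = P" using mv[of x] Px by simp
    show "card (prt V par' lev' c) - Suc s + (card (prt V par' lev' x) - Suc s)
      \<le> card (prt V par lev c) - Suc s + (card (prt V par lev x) - Suc s)"
      unfolding b e Px P_def by simp
  qed
  have ident: "lev' v + (if v \<in> K then 1 else 0) + (if v \<in> {x} then 1 else 0)
             = lev v + (if v \<in> W0 then 1 else 0) + (if v \<in> {c} then 1 else 0)" for v
  proof -
    consider "v = x" | "v = c" | "v \<in> K" | "v \<in> W0" | "v \<noteq> x \<and> v \<noteq> c \<and> v \<notin> K \<and> v \<notin> W0" by blast
    then show ?thesis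
    proof cases
      case 1 then show ?thesis using xK cx lx W0_def by (simp add: lev'_def)
    next
      case 2 then show ?thesis using cK cx cV W0_def by (simp add: lev'_def)
    next
      case 3
      have "v \<noteq> c" "v \<notin> W0" "v \<noteq> x" using 3 cK W0_def xK by auto
      then show ?thesis using 3 Kp[OF 3] by (simp add: lev'_def)
    next
      case 4
      have "v \<noteq> c" "v \<notin> K" "v \<noteq> x" using 4 W0_def by auto
      then show ?thesis using 4 W0p'[OF 4] by (simp add: lev'_def)
    next
      case 5 then show ?thesis by (simp add: lev'_def)
    qed
  qed
  have "(\<Sum>v\<in>V. lev' v + (if v \<in> K then 1 else 0) + (if v \<in> {x} then 1 else 0))
      = (\<Sum>v\<in>V. lev v + (if v \<in> W0 then 1 else 0) + (if v \<in> {c} then 1 else 0))"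
    using ident by simp
  moreover have "(\<Sum>v\<in>V. lev' v + (if v \<in> K then 1 else 0) + (if v \<in> {x} then 1 else 0))
      = dep V lev' + card K + card {x}"
  proof -
    have KV: "K \<subseteq> V" using KP PV by auto
    have xs: "{x} \<subseteq> V" using xV by auto
    show ?thesis by (simp only: sum.distrib sum_ind[OF KV] sum_ind[OF xs] dep_def)
  qed
  moreover have "(\<Sum>v\<in>V. lev v + (if v \<in> W0 then 1 else 0) + (if v \<in> {c} then 1 else 0))
      = dep V lev + card W0 + card {c}"
  proof -
    have "W0 \<subseteq> V" using PV W0_def by auto
    moreover have cs: "{c} \<subseteq> V" using cV(1) by auto
    ultimately show ?thesis by (simp only: sum.distrib sum_ind dep_def)
  qed
  ultimately have "dep V lev' + card K + card {x} = dep V lev + card W0 + card {c}" by simp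
  moreover have "card W0 < card K" using lt W0_def P_def K_def c_def by simp
  ultimately have "dep V lev' < dep V lev" by simp
  then show ?thesis using better_I1[OF val' exc_le] by simp
qed
end


context pg
begin

lemma L1: "valid V E par lev \<Longrightarrow> \<not> better par lev \<Longrightarrow> y \<in> V \<Longrightarrow> lev y = 2 \<Longrightarrow> \<not> E y (ctr par lev y)"
  using M1 by blast

lemma L2:
  assumes val: "valid V E par lev" and nb: "\<not> better par lev" and xV: "x \<in> V" and lx: "lev x = 1"
  shows "card (chl par lev x) \<le> 1"
proof (rule ccontr)
  assume "\<not> ?thesis"
  then have K2: "2 \<le> card (chl par lev x)" by simp
  define K where "K = chl par lev x"
  define c where "c = par x"
  define R where "R = prt V par lev c - insert x K"
  have cV: "c \<in> V" "lev c = 0" "E x c" using par_ok[OF val xV] lx c_def by auto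
  have Kp: "\<And>v. v \<in> K \<Longrightarrow> v \<in> V \<and> lev v = 2 \<and> par v = x \<and> E v x"
    using chl_props[OF val xV lx] K_def by blast
  show False
  proof (cases "3 \<le> card R")
    case True
    then show False using M2[OF val xV lx K2] nb R_def K_def c_def by simp
  next
    case False
    then have R2: "card R \<le> 2" by simp
    have Rfin: "finite R" using prt_fin R_def by simp
    have cR: "c \<in> R" using cV Kp lx R_def by (auto simp: prt_def ctr_def)
    have W0R: "prt V par lev c - {c, x} - K = R - {c}" using R_def by auto
    have W0p: "lev w = 1 \<and> (\<forall>v\<in>V. lev v \<noteq> 0 \<longrightarrow> par v \<noteq> w)"
      if w: "w \<in> prt V par lev c - {c, x} - K" for w
    proof -
      have wV: "w \<in> V" and wc: "ctr par lev w = c" using w by (auto simp: prt_def)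
      have wR: "w \<in> R" "w \<noteq> c" using w W0R by auto
      have l0: "lev w \<noteq> 0"
      proof
        assume "lev w = 0" then have "ctr par lev w = w" by (simp add: ctr_def)
        then show False using wc wR(2) by simp
      qed
      have l2: "lev w \<noteq> 2"
      proof
        assume l2: "lev w = 2"
        define p where "p = par w"
        have pp: "p \<in> V" "lev p = 1" using par_ok[OF val wV l0] l2 p_def by auto
        have "ctr par lev p = c" using ctr_par[OF val wV l0] wc p_def by simp
        then have "p \<in> prt V par lev c" using pp by (simp add: prt_def)
        moreover have "p \<noteq> x"
        proof
          assume "p = x" then have "w \<in> K" using wV l0 p_def K_def by (simp add: chl_def)
          then show False using w by simp
        qed
        moreover have "p \<notin> K" using Kp pp by fastforce
        ultimately have "p \<in> R" using R_def by simp
        moreover have "p \<noteq> c" "p \<noteq> w" using pp cV l2 by auto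
        ultimately have "3 \<le> card R" using card3[OF Rfin cR wR(1)] wR(2) by metis
        then show False using R2 by simp
      qed
      have l1: "lev w = 1" using l0 l2 lev_le2[OF val wV] by linarith
      have "\<forall>v\<in>V. lev v \<noteq> 0 \<longrightarrow> par v \<noteq> w"
      proof (intro ballI impI notI)
        fix v assume v: "v \<in> V" "lev v \<noteq> 0" "par v = w"
        have "v \<in> prt V par lev c" using prt_closed[OF val v(1,2)] v(3) w by simp
        moreover have "v \<noteq> x" using v(3) wR(2) c_def by auto
        moreover have "v \<notin> K" using v(3) Kp w by auto
        ultimately have vR: "v \<in> R" using R_def by simp
        have "lev v = 2" using par_ok[OF val v(1,2)] v(3) l1 by simp
        then have "v \<noteq> c" "v \<noteq> w" using cV l1 by auto
        then have "3 \<le> card R" using card3[OF Rfin cR wR(1) vR] wR(2) by metis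
        then show False using R2 by simp
      qed
      then show ?thesis using l1 by simp
    qed
    have "card (prt V par lev c - {c, x} - K) < card K"
    proof -
      have "card (R - {c}) = card R - 1" using cR Rfin by simp
      then show ?thesis using W0R R2 K2 K_def by simp
    qed
    then have "better par lev" using M3[OF val xV lx] W0p K_def c_def by simp
    then show False using nb by simp
  qed
qed

lemma L3:
  assumes val: "valid V E par lev" and nb: "\<not> better par lev" and zV: "z \<in> V" and lz: "lev z = 2"
  shows "4 \<le> card (prt V par lev (ctr par lev z))"
proof (rule ccontr)
  assume "\<not> ?thesis"
  then have c3: "card (prt V par lev (ctr par lev z)) \<le> 3" by simp
  define x where "x = par z"
  have xp: "x \<in> V" "lev x = 1" "E z x" using par_ok[OF val zV] lz x_def by auto
  define c where "c = par x"
  have cp: "c \<in> V" "lev c = 0" using par_ok[OF val xp(1)] xp c_def by auto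
  have zc: "ctr par lev z = c" using lz x_def c_def by (simp add: ctr_def)
  define P where "P = prt V par lev c"
  have sub: "{c, x, z} \<subseteq> P" using cp xp zV lz zc c_def P_def by (auto simp: prt_def ctr_def)
  have "c \<noteq> x" "c \<noteq> z" "x \<noteq> z" using cp xp lz by auto
  then have d3: "card {c, x, z} = 3" by simp
  have "card P \<le> 3" using c3 zc P_def by simp
  moreover have "card {c, x, z} \<le> card P" using card_mono[OF _ sub] prt_fin P_def by simp
  ultimately have "{c, x, z} = P" using card_subset_eq[OF _ sub] prt_fin d3 P_def by simp
  moreover have zK: "z \<in> chl par lev x" using zV lz x_def by (simp add: chl_def)
  ultimately have W0: "P - {c, x} - chl par lev x = {}" by auto
  have "0 < card (chl par lev x)" using zK chl_fin card_gt_0_iff by blast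
  have W0': "prt V par lev (par x) - {par x, x} - chl par lev x = {}" using W0 P_def c_def by simp
  have lt: "card (prt V par lev (par x) - {par x, x} - chl par lev x) < card (chl par lev x)"
    unfolding W0' using \<open>0 < card (chl par lev x)\<close> by simp
  have wp: "\<And>w. w \<in> prt V par lev (par x) - {par x, x} - chl par lev x \<Longrightarrow>
                  lev w = 1 \<and> (\<forall>v\<in>V. lev v \<noteq> 0 \<longrightarrow> par v \<noteq> w)"
    unfolding W0' by simp
  have "better par lev" by (rule M3[OF val xp(1,2) wp lt])
  then show False using nb by simp
qed

lemma attach0:
  assumes val: "valid V E par lev" and yV: "y \<in> V" and ly: "lev y = 2"
    and big: "Suc s < card (prt V par lev (ctr par lev y))"
    and zV: "z \<in> V" and lz: "lev z = 0" and zc: "z \<noteq> ctr par lev y" and Eyz: "E y z"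
  shows "better par lev"
proof -
  define c where "c = ctr par lev y"
  have cV: "c \<in> V" "lev c = 0" using ctr_props[OF val yV] c_def by auto
  have zy: "z \<noteq> y" using lz ly by auto
  define par' where "par' = par(y := z)"
  define lev' where "lev' = lev(y := 1)"
  have out: "\<And>v. v \<notin> {y} \<Longrightarrow> par' v = par v \<and> lev' v = lev v"
    by (simp add: par'_def lev'_def)
  have closed: "\<And>v. v \<in> V \<Longrightarrow> lev v \<noteq> 0 \<Longrightarrow> par v \<in> {y} \<Longrightarrow> v \<in> {y}"
    using no_child2[OF val] ly by fastforce
  have inN: "\<And>v. v \<in> {y} \<Longrightarrow> loc_ok V E par' lev' v \<and> ctr par' lev' v = z"
    using zV zy Eyz lz by (auto simp: loc_ok_def ctr_def par'_def lev'_def)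
  have yV': "{y} \<subseteq> V" using yV by simp
  have mv: "prt V par' lev' d = (prt V par lev d - {y}) \<union> (if d = z then {y} else {})" for d
    using move(2)[OF val yV' out closed inN] by blast
  have yc: "y \<in> prt V par lev c" using yV c_def by (simp add: prt_def)
  have yo: "y \<notin> prt V par lev d" if "d \<noteq> c" for d using that c_def by (simp add: prt_def)
  have zcc: "z \<noteq> c" using zc c_def by simp
  have cc: "card (prt V par lev c - {y}) = card (prt V par lev c) - 1" using yc prt_fin by simp
  have val': "valid V E par' lev'"
  proof (rule move_valid[OF val yV' out closed inN])
    fix d assume d: "d \<in> V" "lev' d = 0"
    have "d \<noteq> y" using d(2) by (auto simp: lev'_def)
    then have ld: "lev d = 0" using d(2) by (simp add: lev'_def)
    show "3 \<le> card ((prt V par lev d - {y}) \<union> (if d = z then {y} else {}))"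
    proof (cases "d = z")
      case True
      then have "(prt V par lev d - {y}) \<union> (if d = z then {y} else {}) = insert y (prt V par lev d)"
        by auto
      then show ?thesis using valid_card[OF val d(1) ld] prt_fin by (simp add: card_insert_le order_trans)
    next
      case False
      show ?thesis
      proof (cases "d = c")
        case True then show ?thesis using False cc big c_def s4 by simp
      next
        case F2: False then show ?thesis using False yo[OF F2] valid_card[OF val d(1) ld] by simp
      qed
    qed
  qed
  have exc_le: "exc V s par' lev' \<le> exc V s par lev"
    unfolding exc_def
  proof (rule sum_pair_le[OF fin cV(1) zV zcc[symmetric]])
    fix d assume d: "d \<in> V" "d \<noteq> c" "d \<noteq> z"
    have "card (prt V par' lev' d) \<le> card (prt V par lev d)"
      using mv[of d] d(3) by (simp add: card_mono[OF prt_fin])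
    then show "card (prt V par' lev' d) - Suc s \<le> card (prt V par lev d) - Suc s" by simp
  next
    have b: "prt V par' lev' c = prt V par lev c - {y}" using mv[of c] zcc by simp
    have e: "prt V par' lev' z = insert y (prt V par lev z)" using mv[of z] yo[OF zcc] by auto
    have e2: "card (insert y (prt V par lev z)) = Suc (card (prt V par lev z))"
      using yo[OF zcc] prt_fin by simp
    show "card (prt V par' lev' c) - Suc s + (card (prt V par' lev' z) - Suc s)
      \<le> card (prt V par lev c) - Suc s + (card (prt V par lev z) - Suc s)"
      unfolding b e e2 cc using big c_def by simp
  qed
  have "dep V lev' < dep V lev"
    by (rule dep_strict[OF _ yV]) (auto simp: lev'_def ly)
  then show ?thesis using better_I1[OF val' exc_le] by simp
qed

lemma attach1:
  assumes val: "valid V E par lev" and yV: "y \<in> V" and ly: "lev y = 2"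
    and big: "Suc s < card (prt V par lev (ctr par lev y))"
    and zV: "z \<in> V" and lz: "lev z = 1" and zc: "ctr par lev z \<noteq> ctr par lev y"
    and small: "card (prt V par lev (ctr par lev z)) \<le> s" and Eyz: "E y z"
  shows "better par lev"
proof -
  define c where "c = ctr par lev y"
  define w where "w = ctr par lev z"
  have cV: "c \<in> V" "lev c = 0" using ctr_props[OF val yV] c_def by auto
  have wV: "w \<in> V" "lev w = 0" using ctr_props[OF val zV] w_def by auto
  have wz: "w = par z" using lz w_def by (simp add: ctr_def)
  have zy: "z \<noteq> y" using lz ly by auto
  define par' where "par' = par(y := z)"
  have out: "\<And>v. v \<notin> {y} \<Longrightarrow> par' v = par v \<and> lev v = lev v"
    by (simp add: par'_def)
  have closed: "\<And>v. v \<in> V \<Longrightarrow> lev v \<noteq> 0 \<Longrightarrow> par v \<in> {y} \<Longrightarrow> v \<in> {y}"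
    using no_child2[OF val] ly by fastforce
  have inN: "\<And>v. v \<in> {y} \<Longrightarrow> loc_ok V E par' lev v \<and> ctr par' lev v = w"
    using zV zy Eyz lz ly wz by (auto simp: loc_ok_def ctr_def par'_def)
  have yV': "{y} \<subseteq> V" using yV by simp
  have mv: "prt V par' lev d = (prt V par lev d - {y}) \<union> (if d = w then {y} else {})" for d
    using move(2)[OF val yV' out closed inN] by blast
  have yc: "y \<in> prt V par lev c" using yV c_def by (simp add: prt_def)
  have yo: "y \<notin> prt V par lev d" if "d \<noteq> c" for d using that c_def by (simp add: prt_def)
  have wc: "w \<noteq> c" using zc c_def w_def by simp
  have cc: "card (prt V par lev c - {y}) = card (prt V par lev c) - 1" using yc prt_fin by simp
  have val': "valid V E par' lev"
  proof (rule move_valid[OF val yV' out closed inN])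
    fix d assume d: "d \<in> V" "lev d = 0"
    show "3 \<le> card ((prt V par lev d - {y}) \<union> (if d = w then {y} else {}))"
    proof (cases "d = w")
      case True
      then have "(prt V par lev d - {y}) \<union> (if d = w then {y} else {}) = insert y (prt V par lev d)"
        by auto
      then show ?thesis using valid_card[OF val d] prt_fin by (simp add: card_insert_le order_trans)
    next
      case False
      show ?thesis
      proof (cases "d = c")
        case True then show ?thesis using False cc big c_def s4 by simp
      next
        case F2: False then show ?thesis using False yo[OF F2] valid_card[OF val d] by simp
      qed
    qed
  qed
  have "exc V s par' lev < exc V s par lev"
  proof (rule exc_strict[OF _ _ cV(1) wc[symmetric]])
    show "\<And>d. d \<in> V \<Longrightarrow> d \<noteq> w \<Longrightarrow> prt V par' lev d \<subseteq> prt V par lev d" using mv by auto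
    have "prt V par' lev w = insert y (prt V par lev w)" using mv[of w] yo[OF wc] by auto
    moreover have "card (insert y (prt V par lev w)) \<le> Suc (card (prt V par lev w))"
      by (rule card_insert_le_m1) simp_all
    ultimately show "card (prt V par' lev w) \<le> Suc s" using small w_def
      by (metis (no_types, lifting) card_insert_if prt_fin Suc_le_mono le_SucI)
    show "prt V par' lev c \<subset> prt V par lev c" using mv[of c] wc yc by auto
    show "Suc s < card (prt V par lev c)" using big c_def by simp
  qed
  then show ?thesis using better_I2[OF val'] by simp
qed


lemma V1:
  assumes val: "valid V E par lev" and yV: "y \<in> V" and ly: "lev y = 2"
    and big: "Suc s < card (prt V par lev (ctr par lev y))"
    and onech: "\<And>v. v \<in> V \<Longrightarrow> lev v \<noteq> 0 \<Longrightarrow> par v = par y \<Longrightarrow> v = y"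
    and zV: "z \<in> V" and lz: "lev z \<noteq> 0" and zch: "\<And>v. v \<in> V \<Longrightarrow> lev v \<noteq> 0 \<Longrightarrow> par v \<noteq> z"
    and Eyz: "E y z" and zx: "z \<noteq> par y"
    and c1: "3 \<le> card (prt V par lev (ctr par lev y) - {par y, y, z})"
    and c2: "3 \<le> card (prt V par lev (ctr par lev z) - {par y, y, z})"
  shows "better par lev"
proof -
  define x where "x = par y"
  define c where "c = ctr par lev y"
  have ly0: "lev y \<noteq> 0" using ly by simp
  have xp: "x \<in> V" "lev x = 1" "E y x" using par_ok[OF val yV ly0] ly x_def by auto
  have cx: "c = par x" using ly c_def x_def by (simp add: ctr_def)
  have cp: "c \<in> V" "lev c = 0" using ctr_props[OF val yV] c_def by auto
  have zy: "z \<noteq> y" using Eyz irr by auto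
  have xy: "x \<noteq> y" using xp ly by auto
  have xz: "x \<noteq> z" using zx x_def by simp
  define N where "N = {x, y, z}"
  define par' where "par' = par(x := y, z := y)"
  define lev' where "lev' = lev(y := 0, x := 1, z := 1)"
  have NV: "N \<subseteq> V" using xp yV zV N_def by auto
  have out: "\<And>v. v \<notin> N \<Longrightarrow> par' v = par v \<and> lev' v = lev v"
    by (simp add: par'_def lev'_def N_def)
  have closed: "\<And>v. v \<in> V \<Longrightarrow> lev v \<noteq> 0 \<Longrightarrow> par v \<in> N \<Longrightarrow> v \<in> N"
  proof -
    fix v assume v: "v \<in> V" "lev v \<noteq> 0" "par v \<in> N"
    consider "par v = x" | "par v = y" | "par v = z" using v(3) N_def by auto
    then show "v \<in> N"
    proof cases
      case 1 then show ?thesis using onech[OF v(1,2)] x_def N_def by simp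
    next
      case 2 then show ?thesis using no_child2[OF val v(1,2)] ly by simp
    next
      case 3 then show ?thesis using zch[OF v(1,2)] by simp
    qed
  qed
  have Exy: "E x y" "E z y" using xp(3) Eyz sym by auto
  have inN: "\<And>v. v \<in> N \<Longrightarrow> loc_ok V E par' lev' v \<and> ctr par' lev' v = y"
  proof -
    fix v assume "v \<in> N"
    then consider "v = x" | "v = y" | "v = z" using N_def by auto
    then show "loc_ok V E par' lev' v \<and> ctr par' lev' v = y"
    proof cases
      case 1 then show ?thesis using xy xz zy yV Exy
        by (simp add: loc_ok_def ctr_def par'_def lev'_def)
    next
      case 2 then show ?thesis using xy xz zy
        by (simp add: loc_ok_def ctr_def par'_def lev'_def)
    next
      case 3 then show ?thesis using xy xz zy yV Exy
        by (simp add: loc_ok_def ctr_def par'_def lev'_def)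
    qed
  qed
  have mv: "prt V par' lev' d = (prt V par lev d - N) \<union> (if d = y then N else {})" for d
    using move(2)[OF val NV out closed inN] by blast
  have Py: "prt V par lev y = {}" using prt_empty[OF val] ly by simp
  have xP: "x \<in> prt V par lev c" "y \<in> prt V par lev c"
    using xp yV cx c_def by (auto simp: prt_def ctr_def)
  have zP: "z \<in> prt V par lev (ctr par lev z)" using zV by (simp add: prt_def)
  have oth: "prt V par lev d - N = prt V par lev d" if "d \<noteq> c" "d \<noteq> ctr par lev z" for d
  proof -
    have "x \<notin> prt V par lev d" "y \<notin> prt V par lev d" "z \<notin> prt V par lev d"
      using xP zP that prt_disj by blast+
    then show ?thesis using N_def by auto
  qed
  have cardN: "card N = 3" using xy xz zy N_def by simp
  have val': "valid V E par' lev'"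
  proof (rule move_valid[OF val NV out closed inN])
    fix d assume d: "d \<in> V" "lev' d = 0"
    show "3 \<le> card ((prt V par lev d - N) \<union> (if d = y then N else {}))"
    proof (cases "d \<in> N")
      case True
      have "d = y" using True d(2) xy xz zy N_def by (auto simp: lev'_def)
      then show ?thesis using Py cardN by simp
    next
      case False
      then have ld: "lev d = 0" "d \<noteq> y" using d(2) out[of d] N_def by auto
      consider "d = c" | "d = ctr par lev z" | "d \<noteq> c \<and> d \<noteq> ctr par lev z" by blast
      then show ?thesis
      proof cases
        case 1 then show ?thesis using c1 ld(2) c_def N_def x_def by simp
      next
        case 2 then show ?thesis using c2 ld(2) N_def x_def by simp
      next
        case 3 then show ?thesis using oth ld valid_card[OF val d(1)] by simp
      qed
    qed
  qed
  have cy: "c \<noteq> y" using cp ly by auto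
  have "exc V s par' lev' < exc V s par lev"
  proof (rule exc_strict[OF _ _ cp(1) cy])
    show "\<And>d. d \<in> V \<Longrightarrow> d \<noteq> y \<Longrightarrow> prt V par' lev' d \<subseteq> prt V par lev d" using mv by auto
    show "card (prt V par' lev' y) \<le> Suc s" using mv[of y] Py cardN s4 by simp
    show "prt V par' lev' c \<subset> prt V par lev c" using mv[of c] cy xP N_def by auto
    show "Suc s < card (prt V par lev c)" using big c_def by simp
  qed
  then show ?thesis using better_I2[OF val'] by simp
qed

lemma V2:
  assumes val: "valid V E par lev" and yV: "y \<in> V" and ly: "lev y = 2"
    and big: "Suc s < card (prt V par lev (ctr par lev y))"
    and zV: "z \<in> V" and lz: "lev z = 1" and Eyz: "E y z"
    and y2V: "y2 \<in> V" and ly2: "lev y2 \<noteq> 0" and py2: "par y2 = z" and y2y: "y2 \<noteq> y"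
    and onech: "\<And>v. v \<in> V \<Longrightarrow> lev v \<noteq> 0 \<Longrightarrow> par v = z \<Longrightarrow> v = y2"
    and c1: "3 \<le> card (prt V par lev (ctr par lev y) - {y, z, y2})"
    and c2: "3 \<le> card (prt V par lev (ctr par lev z) - {y, z, y2})"
  shows "better par lev"
proof -
  define c where "c = ctr par lev y"
  have cp: "c \<in> V" "lev c = 0" using ctr_props[OF val yV] c_def by auto
  have y2p: "lev y2 = 2" "E y2 z" using par_ok[OF val y2V ly2] py2 lz by auto
  have zy: "z \<noteq> y" using lz ly by auto
  have zy2: "z \<noteq> y2" using lz y2p by auto
  define N where "N = {y, z, y2}"
  define par' where "par' = par(y := z)"
  define lev' where "lev' = lev(z := 0, y := 1, y2 := 1)"
  have NV: "N \<subseteq> V" using y2V yV zV N_def by auto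
  have out: "\<And>v. v \<notin> N \<Longrightarrow> par' v = par v \<and> lev' v = lev v"
    by (simp add: par'_def lev'_def N_def)
  have closed: "\<And>v. v \<in> V \<Longrightarrow> lev v \<noteq> 0 \<Longrightarrow> par v \<in> N \<Longrightarrow> v \<in> N"
  proof -
    fix v assume v: "v \<in> V" "lev v \<noteq> 0" "par v \<in> N"
    consider "par v = y" | "par v = z" | "par v = y2" using v(3) N_def by auto
    then show "v \<in> N"
    proof cases
      case 1 then show ?thesis using no_child2[OF val v(1,2)] ly by simp
    next
      case 2 then show ?thesis using onech[OF v(1,2)] N_def by simp
    next
      case 3 then show ?thesis using no_child2[OF val v(1,2)] y2p by simp
    qed
  qed
  have inN: "\<And>v. v \<in> N \<Longrightarrow> loc_ok V E par' lev' v \<and> ctr par' lev' v = z"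
  proof -
    fix v assume "v \<in> N"
    then consider "v = y" | "v = z" | "v = y2" using N_def by auto
    then show "loc_ok V E par' lev' v \<and> ctr par' lev' v = z"
    proof cases
      case 1 then show ?thesis using zy zy2 y2y zV Eyz
        by (simp add: loc_ok_def ctr_def par'_def lev'_def)
    next
      case 2 then show ?thesis using zy zy2 y2y
        by (simp add: loc_ok_def ctr_def par'_def lev'_def)
    next
      case 3 then show ?thesis using zy zy2 y2y zV y2p py2
        by (simp add: loc_ok_def ctr_def par'_def lev'_def)
    qed
  qed
  have mv: "prt V par' lev' d = (prt V par lev d - N) \<union> (if d = z then N else {})" for d
    using move(2)[OF val NV out closed inN] by blast
  have Pz: "prt V par lev z = {}" using prt_empty[OF val] lz by simp
  have yP: "y \<in> prt V par lev c" using yV c_def by (simp add: prt_def)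
  have zP: "z \<in> prt V par lev (ctr par lev z)" using zV by (simp add: prt_def)
  have y2P: "y2 \<in> prt V par lev (ctr par lev z)"
    using prt_closed[OF val y2V ly2] zP py2 by simp
  have oth: "prt V par lev d - N = prt V par lev d" if "d \<noteq> c" "d \<noteq> ctr par lev z" for d
  proof -
    have "y \<notin> prt V par lev d" "z \<notin> prt V par lev d" "y2 \<notin> prt V par lev d"
      using yP zP y2P that prt_disj by blast+
    then show ?thesis using N_def by auto
  qed
  have cardN: "card N = 3" using zy zy2 y2y N_def by auto
  have val': "valid V E par' lev'"
  proof (rule move_valid[OF val NV out closed inN])
    fix d assume d: "d \<in> V" "lev' d = 0"
    show "3 \<le> card ((prt V par lev d - N) \<union> (if d = z then N else {}))"
    proof (cases "d \<in> N")
      case True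
      have "d = z" using True d(2) zy zy2 y2y N_def by (auto simp: lev'_def)
      then show ?thesis using Pz cardN by simp
    next
      case False
      then have ld: "lev d = 0" "d \<noteq> z" using d(2) out[of d] N_def by auto
      consider "d = c" | "d = ctr par lev z" | "d \<noteq> c \<and> d \<noteq> ctr par lev z" by blast
      then show ?thesis
      proof cases
        case 1 then show ?thesis using c1 ld(2) c_def N_def by simp
      next
        case 2 then show ?thesis using c2 ld(2) N_def by simp
      next
        case 3 then show ?thesis using oth ld valid_card[OF val d(1)] by simp
      qed
    qed
  qed
  have cz: "c \<noteq> z" using cp lz by auto
  have "exc V s par' lev' < exc V s par lev"
  proof (rule exc_strict[OF _ _ cp(1) cz])
    show "\<And>d. d \<in> V \<Longrightarrow> d \<noteq> z \<Longrightarrow> prt V par' lev' d \<subseteq> prt V par lev d" using mv by auto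
    show "card (prt V par' lev' z) \<le> Suc s" using mv[of z] Pz cardN s4 by simp
    show "prt V par' lev' c \<subset> prt V par lev c" using mv[of c] cz yP N_def by auto
    show "Suc s < card (prt V par lev c)" using big c_def by simp
  qed
  then show ?thesis using better_I2[OF val'] by simp
qed

lemma card2_le: "card {a, b} \<le> 2"
  by (simp add: card_insert_if)

lemma card3_le: "card {a, b, d} \<le> 3"
  by (simp add: card_insert_if)

lemma card_minus3: "card A - 3 \<le> card (A - {a, b, d})"
  using diff_card_le_card_Diff[of "{a, b, d}" A] card3_le[of a b d] by simp

lemma card_minus2: "card A - 2 \<le> card (A - {a, b})"
  using diff_card_le_card_Diff[of "{a, b}" A] card2_le[of a b] by simp

lemma card_le1_eq: "card (chl par lev x) \<le> 1 \<Longrightarrow> a \<in> chl par lev x \<Longrightarrow> b \<in> chl par lev x \<Longrightarrow> a = b"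
  using card_le_Suc0_iff_eq[OF chl_fin] by auto

lemma no_big:
  assumes val: "valid V E par lev" and nb: "\<not> better par lev" and cV: "c \<in> V" and lc: "lev c = 0"
  shows "card (prt V par lev c) \<le> Suc s"
proof (rule ccontr)
  assume "\<not> ?thesis"
  then have big: "Suc s < card (prt V par lev c)" by simp
  obtain y where yP: "y \<in> prt V par lev c" and ly: "lev y = 2"
  proof (rule ccontr)
    assume "\<not> thesis"
    then have no2: "\<And>y. y \<in> prt V par lev c \<Longrightarrow> lev y \<noteq> 2" using that by blast
    have "prt V par lev c \<subseteq> insert c {u \<in> V. E c u}"
    proof
      fix v assume vP: "v \<in> prt V par lev c"
      have vV: "v \<in> V" and vc: "ctr par lev v = c" using vP by (auto simp: prt_def)
      have "lev v \<le> 2" using lev_le2[OF val vV] .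
      then consider "lev v = 0" | "lev v = 1" using no2[OF vP] by linarith
      then show "v \<in> insert c {u \<in> V. E c u}"
      proof cases
        case 1 then show ?thesis using vc by (simp add: ctr_def)
      next
        case 2
        then have "par v = c" using vc by (simp add: ctr_def)
        moreover have "E v (par v)" using par_ok[OF val vV] 2 by simp
        ultimately show ?thesis using sym vV by auto
      qed
    qed
    then have "card (prt V par lev c) \<le> card (insert c {u \<in> V. E c u})"
      by (rule card_mono[rotated]) (use fin in simp)
    also have "\<dots> \<le> Suc (card {u \<in> V. E c u})" by (simp add: card_insert_le_m1)
    also have "\<dots> \<le> Suc s" using dhi[OF cV] by (simp add: degree_def)
    finally show False using big by simp
  qed
  have yV: "y \<in> V" and yc: "ctr par lev y = c" using yP by (auto simp: prt_def)
  have bigy: "Suc s < card (prt V par lev (ctr par lev y))" using big yc by simp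
  define x where "x = par y"
  have ly0: "lev y \<noteq> 0" using ly by simp
  have xp: "x \<in> V" "lev x = 1" "E y x" using par_ok[OF val yV ly0] ly x_def by auto
  have yK: "y \<in> chl par lev x" using yV ly x_def by (simp add: chl_def)
  have onech: "\<And>v. v \<in> V \<Longrightarrow> lev v \<noteq> 0 \<Longrightarrow> par v = par y \<Longrightarrow> v = y"
  proof -
    fix v assume v: "v \<in> V" "lev v \<noteq> 0" "par v = par y"
    then have "v \<in> chl par lev x" using x_def by (simp add: chl_def)
    then show "v = y" using card_le1_eq[OF L2[OF val nb xp(1,2)] _ yK] by simp
  qed
  have nEyc: "\<not> E y c" using L1[OF val nb yV ly] yc by simp
  obtain z where zV: "z \<in> V" and Eyz: "E y z" and zx: "z \<noteq> x"
  proof (rule ccontr)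
    assume "\<not> thesis"
    then have "{u \<in> V. E y u} \<subseteq> {x}" using that by blast
    then have "card {u \<in> V. E y u} \<le> card {x}" by (rule card_mono[rotated]) simp
    then show False using dlo[OF yV] by (simp add: degree_def)
  qed
  have zc: "z \<noteq> c" using Eyz nEyc by auto
  have zy: "z \<noteq> y" using Eyz irr by auto
  have m3: "3 \<le> card (prt V par lev c - {a, b, d})" for a b d
    using card_minus3[of "prt V par lev c" a b d] big s4 by simp
  have c1: "3 \<le> card (prt V par lev (ctr par lev y) - {a, b, d})" for a b d
    using m3 yc by simp
  have xP: "x \<in> prt V par lev c" using xp yc ly x_def by (simp add: prt_def ctr_def)
  have lz: "lev z \<le> 2" using lev_le2[OF val zV] .
  consider "lev z = 0" | "lev z = 1" | "lev z = 2" using lz by linarith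
  then have "better par lev"
  proof cases
    case 1
    then show ?thesis using attach0[OF val yV ly bigy zV 1 _ Eyz] zc yc by simp
  next
    case 3
    have zch: "\<And>v. v \<in> V \<Longrightarrow> lev v \<noteq> 0 \<Longrightarrow> par v \<noteq> z"
      using no_child2[OF val] 3 by blast
    have lz0: "lev z \<noteq> 0" using 3 by simp
    have zx': "z \<noteq> par y" using zx x_def by simp
    show ?thesis
    proof (cases "ctr par lev z = c")
      case ctz: True
      have c2: "3 \<le> card (prt V par lev (ctr par lev z) - {par y, y, z})" using m3[of "par y" y z] ctz by simp
      show ?thesis by (rule V1[OF val yV ly bigy onech zV lz0 zch Eyz zx' c1[of "par y" y z] c2])
    next
      case False
      have "x \<notin> prt V par lev (ctr par lev z)" "y \<notin> prt V par lev (ctr par lev z)"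
        using xP yP False prt_disj by blast+
      then have eq: "prt V par lev (ctr par lev z) - {par y, y, z} = prt V par lev (ctr par lev z) - {z}"
        using x_def by auto
      have zP: "z \<in> prt V par lev (ctr par lev z)" using zV by (simp add: prt_def)
      have "card (prt V par lev (ctr par lev z) - {z}) = card (prt V par lev (ctr par lev z)) - 1"
        using zP prt_fin by simp
      then have c2: "3 \<le> card (prt V par lev (ctr par lev z) - {par y, y, z})"
        using eq L3[OF val nb zV 3] by simp
      show ?thesis by (rule V1[OF val yV ly bigy onech zV lz0 zch Eyz zx' c1[of "par y" y z] c2])
    qed
  next
    case 2
    define w where "w = ctr par lev z"
    have lz0: "lev z \<noteq> 0" using 2 by simp
    have zx': "z \<noteq> par y" using zx x_def by simp
    have zP: "z \<in> prt V par lev w" using zV w_def by (simp add: prt_def)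
    show ?thesis
    proof (cases "w \<noteq> c \<and> card (prt V par lev w) \<le> s")
      case True
      then show ?thesis using attach1[OF val yV ly bigy zV 2 _ _ Eyz] yc w_def by simp
    next
      case False
      then have wc: "w = c \<or> Suc s \<le> card (prt V par lev w)" by auto
      have yw: "w \<noteq> c \<Longrightarrow> y \<notin> prt V par lev w \<and> x \<notin> prt V par lev w"
        using xP yP prt_disj by blast
      show ?thesis
      proof (cases "chl par lev z = {}")
        case True
        have zch: "\<And>v. v \<in> V \<Longrightarrow> lev v \<noteq> 0 \<Longrightarrow> par v \<noteq> z"
          using True by (auto simp: chl_def)
        have c2: "3 \<le> card (prt V par lev w - {par y, y, z})"
        proof (cases "w = c")
          case True then show ?thesis using m3 by simp
        next
          case False
          then have "prt V par lev w - {par y, y, z} = prt V par lev w - {z}"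
            using yw x_def by auto
          moreover have "card (prt V par lev w - {z}) = card (prt V par lev w) - 1"
            using zP prt_fin by simp
          ultimately show ?thesis using wc False s4 by simp
        qed
        have c2': "3 \<le> card (prt V par lev (ctr par lev z) - {par y, y, z})" using c2 w_def by simp
        show ?thesis by (rule V1[OF val yV ly bigy onech zV lz0 zch Eyz zx' c1[of "par y" y z] c2'])
      next
        case False
        then obtain y2 where y2K: "y2 \<in> chl par lev z" by blast
        have y2p: "y2 \<in> V" "lev y2 \<noteq> 0" "par y2 = z" using y2K by (auto simp: chl_def)
        have y2y: "y2 \<noteq> y" using y2p(3) zx x_def by auto
        have onez: "\<And>v. v \<in> V \<Longrightarrow> lev v \<noteq> 0 \<Longrightarrow> par v = z \<Longrightarrow> v = y2"
        proof -
          fix v assume v: "v \<in> V" "lev v \<noteq> 0" "par v = z"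
          then have "v \<in> chl par lev z" by (simp add: chl_def)
          then show "v = y2" using card_le1_eq[OF L2[OF val nb zV 2] _ y2K] by simp
        qed
        have c2: "3 \<le> card (prt V par lev w - {y, z, y2})"
        proof (cases "w = c")
          case True then show ?thesis using m3 by simp
        next
          case False
          then have "prt V par lev w - {y, z, y2} = prt V par lev w - {z, y2}"
            using yw by auto
          moreover have "card (prt V par lev w) - 2 \<le> card (prt V par lev w - {z, y2})"
            by (rule card_minus2)
          ultimately show ?thesis using wc False s4 by simp
        qed
        have c2': "3 \<le> card (prt V par lev (ctr par lev z) - {y, z, y2})" using c2 w_def by simp
        show ?thesis by (rule V2[OF val yV ly bigy zV 2 Eyz y2p y2y onez c1[of y z y2] c2'])
      qed
    qed
  qed
  then show False using nb by simp
qed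
end


context pg
begin

lemma exists_valid: "\<exists>par lev. valid V E par lev"
proof -
  define pk where "pk I \<longleftrightarrow> I \<subseteq> V \<and> (\<forall>a\<in>I. \<forall>b\<in>I. a \<noteq> b \<longrightarrow> \<not> E a b \<and> (\<forall>u. \<not> (E a u \<and> E u b)))" for I
  have p0: "pk {}" by (simp add: pk_def)
  have bd: "\<forall>J. pk J \<longrightarrow> card J < Suc (card V)"
  proof (intro allI impI)
    fix J assume "pk J"
    then have "J \<subseteq> V" by (simp add: pk_def)
    then show "card J < Suc (card V)" using card_mono[OF fin] by (simp add: le_imp_less_Suc)
  qed
  obtain I where pI: "pk I" and maxI: "\<forall>J. pk J \<longrightarrow> card J \<le> card I"
    using ex_has_greatest_nat[OF p0 bd] by blast
  have IV: "I \<subseteq> V" using pI by (simp add: pk_def)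
  have finI: "finite I" using finite_subset[OF IV fin] .
  have indep: "\<And>a b. a \<in> I \<Longrightarrow> b \<in> I \<Longrightarrow> a \<noteq> b \<Longrightarrow> \<not> E a b \<and> (\<forall>u. \<not> (E a u \<and> E u b))"
    using pI by (simp add: pk_def)
  have cover: "(\<exists>a\<in>I. E v a) \<or> (\<exists>u. E v u \<and> (\<exists>a\<in>I. E u a))" if v: "v \<in> V" "v \<notin> I" for v
  proof (rule ccontr)
    assume nc: "\<not> ?thesis"
    have B: "\<forall>a\<in>insert v I. \<forall>b\<in>insert v I. a \<noteq> b \<longrightarrow> \<not> E a b \<and> (\<forall>u. \<not> (E a u \<and> E u b))"
    proof (intro ballI impI)
      fix a b assume ab: "a \<in> insert v I" "b \<in> insert v I" "a \<noteq> b"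
      show "\<not> E a b \<and> (\<forall>u. \<not> (E a u \<and> E u b))"
      proof (cases "a = v")
        case True
        then have "b \<in> I" using ab by auto
        then show ?thesis using nc True by blast
      next
        case False
        then have aI: "a \<in> I" using ab by auto
        show ?thesis
        proof (cases "b = v")
          case True
          have "\<not> E v a" using nc aI by blast
          moreover have "\<forall>u. \<not> (E v u \<and> E u a)" using nc aI by blast
          ultimately show ?thesis using True sym by blast
        next
          case False
          then have "b \<in> I" using ab by auto
          then show ?thesis using indep aI ab(3) by blast
        qed
      qed
    qed
    then have "pk (insert v I)" using v IV by (simp add: pk_def)
    then have "card (insert v I) \<le> card I" using maxI by blast
    then show False using finI v(2) by simp
  qed
  define lev where "lev v = (if v \<in> I then 0 else if (\<exists>a\<in>I. E v a) then 1 else (2::nat))" for v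
  define par where "par v = (if v \<in> I then v else if (\<exists>a\<in>I. E v a) then (SOME a. a \<in> I \<and> E v a)
      else (SOME u. E v u \<and> (\<exists>a\<in>I. E u a)))" for v
  have lok: "loc_ok V E par lev v" if vV: "v \<in> V" for v
  proof (cases "v \<in> I")
    case True then show ?thesis by (simp add: loc_ok_def lev_def)
  next
    case nI: False
    show ?thesis
    proof (cases "\<exists>a\<in>I. E v a")
      case True
      then have ex1: "\<exists>a. a \<in> I \<and> E v a" by blast
      have "par v = (SOME a. a \<in> I \<and> E v a)" using nI True by (simp add: par_def)
      then have s: "par v \<in> I \<and> E v (par v)" using someI_ex[OF ex1] by simp
      then show ?thesis using nI True IV by (auto simp: loc_ok_def lev_def)
    next
      case False
      then have ex: "\<exists>u. E v u \<and> (\<exists>a\<in>I. E u a)" using cover[OF vV nI] by blast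
      have "par v = (SOME u. E v u \<and> (\<exists>a\<in>I. E u a))" using nI False by (simp add: par_def)
      then have s: "E v (par v) \<and> (\<exists>a\<in>I. E (par v) a)" using someI_ex[OF ex] by simp
      have pV: "par v \<in> V" using s inV by blast
      have pI: "par v \<notin> I" using s False by blast
      have "lev (par v) = 1" using s pI by (simp add: lev_def)
      then show ?thesis using nI False s pV by (simp add: loc_ok_def lev_def)
    qed
  qed
  have cards: "3 \<le> card (prt V par lev d)" if dV: "d \<in> V" and ld: "lev d = 0" for d
  proof -
    have dI: "d \<in> I" using ld by (simp add: lev_def split: if_splits)
    have sub: "insert d {u \<in> V. E d u} \<subseteq> prt V par lev d"
    proof
      fix u assume u: "u \<in> insert d {u \<in> V. E d u}"
      show "u \<in> prt V par lev d"
      proof (cases "u = d")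
        case True then show ?thesis using dV ld by (simp add: prt_def ctr_def)
      next
        case False
        then have uV: "u \<in> V" and Edu: "E d u" using u by auto
        have uI: "u \<notin> I" using indep[OF dI] Edu irr by blast
        have Eud: "E u d" using sym Edu by blast
        have ex: "\<exists>a\<in>I. E u a" using dI Eud by blast
        then have ex1: "\<exists>a. a \<in> I \<and> E u a" by blast
        have "par u = (SOME a. a \<in> I \<and> E u a)" using uI ex by (simp add: par_def)
        then have s: "par u \<in> I \<and> E u (par u)" using someI_ex[OF ex1] by simp
        have "par u = d"
        proof (rule ccontr)
          assume ne: "par u \<noteq> d"
          then show False using indep[OF dI _ ne[symmetric], of] s Edu by blast
        qed
        moreover have "lev u = 1" using uI ex by (simp add: lev_def)
        ultimately show ?thesis using uV by (simp add: prt_def ctr_def)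
      qed
    qed
    have "d \<notin> {u \<in> V. E d u}" using irr by simp
    then have "card (insert d {u \<in> V. E d u}) = Suc (degree V E d)"
      using fin by (simp add: degree_def)
    then have "3 \<le> card (insert d {u \<in> V. E d u})" using dlo[OF dV] by simp
    also have "\<dots> \<le> card (prt V par lev d)" by (rule card_mono[OF prt_fin sub])
    finally show ?thesis .
  qed
  have "valid V E par lev" using lok cards by (simp add: valid_def)
  then show ?thesis by blast
qed

lemma exists_opt: "\<exists>par lev. valid V E par lev \<and> \<not> better par lev"
proof -
  obtain p0 l0 where v0: "valid V E p0 l0" using exists_valid by blast
  have "\<exists>x. (\<lambda>(p, l). valid V E p l) x \<and>
      (\<forall>y. (\<lambda>(p, l). valid V E p l) y \<longrightarrow> (\<lambda>(p, l). mu V s p l) x \<le> (\<lambda>(p, l). mu V s p l) y)"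
    by (rule ex_has_least_nat[of "\<lambda>(p, l). valid V E p l" "(p0, l0)"]) (simp add: v0)
  then obtain p l where vl: "valid V E p l" and mn: "\<And>p' l'. valid V E p' l' \<Longrightarrow> mu V s p l \<le> mu V s p' l'"
    by fastforce
  have "\<not> better p l"
    unfolding better_def using mn by (meson not_le)
  then show ?thesis using vl by blast
qed

lemma count:
  assumes val: "valid V E par lev"
    and nbig: "\<And>c. c \<in> V \<Longrightarrow> lev c = 0 \<Longrightarrow> card (prt V par lev c) \<le> Suc s"
  shows "card V \<le> Suc s * card {d \<in> V. lev d = 0}"
    and "\<exists>P. P3_packing E P \<and> finite P \<and> card P = card {d \<in> V. lev d = 0}"
proof -
  define Cs where "Cs = {d \<in> V. lev d = 0}"
  have finC: "finite Cs" using fin Cs_def by simp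
  have "V \<subseteq> (\<Union>d\<in>Cs. prt V par lev d)"
  proof
    fix v assume v: "v \<in> V"
    have "ctr par lev v \<in> Cs" using ctr_props[OF val v] Cs_def by simp
    moreover have "v \<in> prt V par lev (ctr par lev v)" using v by (simp add: prt_def)
    ultimately show "v \<in> (\<Union>d\<in>Cs. prt V par lev d)" by blast
  qed
  then have "card V \<le> card (\<Union>d\<in>Cs. prt V par lev d)"
    by (rule card_mono[rotated]) (use finC prt_fin in simp)
  also have "\<dots> \<le> (\<Sum>d\<in>Cs. card (prt V par lev d))" by (rule card_UN_le[OF finC])
  also have "\<dots> \<le> (\<Sum>d\<in>Cs. Suc s)" by (rule sum_mono) (use nbig Cs_def in auto)
  also have "\<dots> = Suc s * card Cs" by simp
  finally show "card V \<le> Suc s * card {d \<in> V. lev d = 0}" using Cs_def by simp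
  have ex: "\<exists>p. is_P3 E p \<and> P3_verts p \<subseteq> prt V par lev d" if dC: "d \<in> Cs" for d
  proof -
    have dV: "d \<in> V" and ld: "lev d = 0" using dC Cs_def by auto
    have dP: "d \<in> prt V par lev d" using dV ld by (simp add: prt_def ctr_def)
    define Ch where "Ch = {v \<in> V. lev v = 1 \<and> par v = d}"
    have ChP: "x \<in> prt V par lev d" if "x \<in> Ch" for x using that Ch_def by (simp add: prt_def ctr_def)
    have ChE: "E x d" if "x \<in> Ch" for x using that Ch_def par_ok[OF val, of x] by auto
    show ?thesis
    proof (cases "\<exists>x1\<in>Ch. \<exists>x2\<in>Ch. x1 \<noteq> x2")
      case True
      then obtain x1 x2 where x: "x1 \<in> Ch" "x2 \<in> Ch" "x1 \<noteq> x2" by blast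
      have "is_P3 E (x1, d, x2)" using x ChE sym by (simp add: is_P3_def)
      moreover have "P3_verts (x1, d, x2) \<subseteq> prt V par lev d"
        using x ChP dP by (simp add: P3_verts_def)
      ultimately show ?thesis by blast
    next
      case False
      have finCh: "finite Ch" using fin Ch_def by simp
      have "card Ch \<le> 1" using False card_le_Suc0_iff_eq[OF finCh] by auto
      obtain y where yP: "y \<in> prt V par lev d" and ly: "lev y = 2"
      proof (rule ccontr)
        assume "\<not> thesis"
        then have no2: "\<And>y. y \<in> prt V par lev d \<Longrightarrow> lev y \<noteq> 2" using that by blast
        have "prt V par lev d \<subseteq> insert d Ch"
        proof
          fix v assume vP: "v \<in> prt V par lev d"
          have vV: "v \<in> V" and vc: "ctr par lev v = d" using vP by (auto simp: prt_def)
          have "lev v \<le> 2" using lev_le2[OF val vV] .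
          then consider "lev v = 0" | "lev v = 1" using no2[OF vP] by linarith
          then show "v \<in> insert d Ch"
          proof cases
            case 1 then show ?thesis using vc by (simp add: ctr_def)
          next
            case 2 then show ?thesis using vc vV Ch_def by (simp add: ctr_def)
          qed
        qed
        then have "card (prt V par lev d) \<le> card (insert d Ch)"
          by (rule card_mono[rotated]) (use finCh in simp)
        also have "\<dots> \<le> Suc (card Ch)" by (simp add: card_insert_le_m1)
        finally show False using \<open>card Ch \<le> 1\<close> valid_card[OF val dV ld] by simp
      qed
      have yV: "y \<in> V" and yc: "ctr par lev y = d" using yP by (auto simp: prt_def)
      have ly0: "lev y \<noteq> 0" using ly by simp
      define x where "x = par y"
      have xp: "x \<in> V" "lev x = 1" "E y x" using par_ok[OF val yV ly0] ly x_def by auto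
      have xd: "par x = d" using yc ly x_def by (simp add: ctr_def)
      have xCh: "x \<in> Ch" using xp xd Ch_def by simp
      have "is_P3 E (d, x, y)" using ChE[OF xCh] xp(3) sym ld ly by (auto simp: is_P3_def)
      moreover have "P3_verts (d, x, y) \<subseteq> prt V par lev d"
        using ChP[OF xCh] dP yP by (simp add: P3_verts_def)
      ultimately show ?thesis by blast
    qed
  qed
  define f where "f d = (SOME p. is_P3 E p \<and> P3_verts p \<subseteq> prt V par lev d)" for d
  have fp: "is_P3 E (f d) \<and> P3_verts (f d) \<subseteq> prt V par lev d" if "d \<in> Cs" for d
    unfolding f_def by (rule someI_ex[OF ex[OF that]])
  have ne: "P3_verts p \<noteq> {}" for p :: "'a \<times> 'a \<times> 'a"
    by (cases p) (auto simp: P3_verts_def)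
  have inj: "inj_on f Cs"
  proof (rule inj_onI)
    fix d d' assume dd: "d \<in> Cs" "d' \<in> Cs" "f d = f d'"
    show "d = d'"
    proof (rule ccontr)
      assume "d \<noteq> d'"
      then have "prt V par lev d \<inter> prt V par lev d' = {}" by (rule prt_disj)
      moreover have "P3_verts (f d) \<subseteq> prt V par lev d \<inter> prt V par lev d'"
        using fp[OF dd(1)] fp[OF dd(2)] dd(3) by auto
      ultimately show False using ne[of "f d"] by auto
    qed
  qed
  have pack: "P3_packing E (f ` Cs)"
    unfolding P3_packing_def
  proof (intro conjI ballI impI)
    fix p assume "p \<in> f ` Cs"
    then show "is_P3 E p" using fp by auto
  next
    fix p q assume pq: "p \<in> f ` Cs" "q \<in> f ` Cs" "p \<noteq> q"
    then obtain d d' where dd: "d \<in> Cs" "d' \<in> Cs" "p = f d" "q = f d'" by blast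
    then have "d \<noteq> d'" using pq(3) by auto
    then have "prt V par lev d \<inter> prt V par lev d' = {}" by (rule prt_disj)
    then show "P3_verts p \<inter> P3_verts q = {}" using fp[OF dd(1)] fp[OF dd(2)] dd(3,4) by auto
  qed
  have "card (f ` Cs) = card Cs" using card_image[OF inj] .
  then show "\<exists>P. P3_packing E P \<and> finite P \<and> card P = card {d \<in> V. lev d = 0}"
    using pack finC Cs_def by blast
qed

lemma lambda_ge:
  assumes "P3_packing E P" "finite P"
  shows "card P \<le> lambda V E"
proof -
  have sub: "Q \<subseteq> V \<times> V \<times> V" if "P3_packing E Q" for Q
  proof
    fix p assume "p \<in> Q"
    then have "is_P3 E p" using that by (simp add: P3_packing_def)
    then show "p \<in> V \<times> V \<times> V" using inV by (cases p) (auto simp: is_P3_def)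
  qed
  have finV3: "finite (V \<times> V \<times> V)" using fin by simp
  have "{card P | P. P3_packing E P \<and> finite P} \<subseteq> {..card (V \<times> V \<times> V)}"
    using sub card_mono[OF finV3] by auto
  then have "finite {card P | P. P3_packing E P \<and> finite P}" using finite_subset by blast
  moreover have "card P \<in> {card P | P. P3_packing E P \<and> finite P}" using assms by blast
  ultimately show ?thesis unfolding lambda_def by (rule Max_ge)
qed

lemma main: "real (card V) / real (s + 1) \<le> real (lambda V E)"
proof -
  obtain par lev where val: "valid V E par lev" and nb: "\<not> better par lev"
    using exists_opt by blast
  have nbig: "\<And>c. c \<in> V \<Longrightarrow> lev c = 0 \<Longrightarrow> card (prt V par lev c) \<le> Suc s"
    using no_big[OF val nb] by blast
  obtain P where P: "P3_packing E P" "finite P" "card P = card {d \<in> V. lev d = 0}"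
    using count(2)[OF val nbig] by blast
  have "card V \<le> Suc s * card P" using count(1)[OF val nbig] P(3) by simp
  also have "\<dots> \<le> Suc s * lambda V E" using lambda_ge[OF P(1,2)] by (rule mult_le_mono2)
  finally have "real (card V) \<le> real (s + 1) * real (lambda V E)"
    by (metis of_nat_le_iff of_nat_mult Suc_eq_plus1)
  then show ?thesis by (simp add: divide_le_eq mult.commute)
qed

end

theorem theorem1p7:
  fixes V :: "'a set" and E :: "'a \<Rightarrow> 'a \<Rightarrow> bool" and s :: nat
  assumes "s \<ge> 4" and "in_class 2 s V E"
  shows "real (lambda V E) \<ge> real (card V) / real (s + 1)"
proof -
  have sg: "simple_graph V E" and dg: "\<forall>v\<in>V. 2 \<le> degree V E v \<and> degree V E v \<le> s"
    using assms(2) by (auto simp: in_class_def)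
  interpret pg V E s
    using sg dg assms(1) by unfold_locales (auto simp: simple_graph_def)
  show ?thesis using main by simp
qed

end
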